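(* Let $n\ge1$ and let $\lambda_1,\dots,\lambda_n$ be distinct complex numbers with $\mathrm{Re}(\lambda_j)>-1/2$ for all $j$. Then for every Müntz polynomial $P(x)=\sum_{j=1}^na_jx^{\lambda_j}$ ($x\in(0,1]$) with $a_j\in\mathbb{C}$, $$\|xP'(x)\|_{L_2[0,1]} \le \left(\max_{1\le j\le n}|\lambda_j| + \left(\sum_{j=1}^n\left(1+2\mathrm{Re}(\lambda_j)\right)\sum_{k=j+1}^n\left(1+2\mathrm{Re}(\lambda_k)\right)\right)^{1/2}\right)\|P\|_{L_2[0,1]}.$$
   Context: $x^{\lambda}:=e^{\lambda\log x}$ for $x\in(0,1]$; $\|g\|_{L_2[0,1]}=(\int_0^1|g(x)|^2dx)^{1/2}$. *)

theory Defs
  imports "HOL-Analysis.Analysis"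
begin

definition rpow_c :: "real \<Rightarrow> complex \<Rightarrow> complex" where
  "rpow_c x l = exp (l * complex_of_real (ln x))"

definition muntz :: "nat \<Rightarrow> (nat \<Rightarrow> complex) \<Rightarrow> (nat \<Rightarrow> complex) \<Rightarrow> real \<Rightarrow> complex" where
  "muntz n a lam x = (\<Sum>j=1..n. a j * rpow_c x (lam j))"

text \<open>L2[0,1] norm (Lebesgue measure; the endpoint 0 is a null set).\<close>
definition L2_norm01 :: "(real \<Rightarrow> complex) \<Rightarrow> real" where
  "L2_norm01 g = sqrt (LINT x:{0<..1}|lborel. (cmod (g x))^2)"

end

theory Submission
  imports Defs
begin

lemma rpow_c_pos_norm: "x > 0 \<Longrightarrow> norm (rpow_c x s) = x powr (Re s)"
  by (simp add: rpow_c_def powr_def)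

lemma real_pow_int:
  fixes a :: real assumes "a > -1"
  shows "set_integrable lborel {0<..<1} (\<lambda>x. x powr a)"
proof -
  have "set_integrable lborel (einterval 0 1) (\<lambda>x. x powr a)"
  proof (rule interval_integral_FTC_nonneg(1)[where F="\<lambda>x. x powr (a+1) / (a+1)" and A=0 and B="1/(a+1)"])
    show "(0::ereal) < 1" by simp
    fix x :: real assume "0 < ereal x" "ereal x < 1"
    then have x: "0 < x" by (simp_all add: zero_ereal_def)
    show "((\<lambda>x. x powr (a+1) / (a+1)) has_real_derivative x powr a) (at x)"
      using has_real_derivative_powr[OF x, of "a+1"] assms x
      by (auto intro!: derivative_eq_intros)
    show "isCont (\<lambda>x. x powr a) x" using x by (auto intro!: continuous_intros)
  next
    show "AE x in lborel. 0 < ereal x \<longrightarrow> ereal x < 1 \<longrightarrow> 0 \<le> x powr a" by simp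
    show "(((\<lambda>x. x powr (a+1) / (a+1)) \<circ> real_of_ereal) \<longlongrightarrow> 0) (at_right 0)"
      using assms unfolding zero_ereal_def ereal_tendsto_simps
      by (auto intro!: tendsto_eq_intros eventually_at_rightI[of 0 1])
    show "(((\<lambda>x. x powr (a+1) / (a+1)) \<circ> real_of_ereal) \<longlongrightarrow> 1/(a+1)) (at_left 1)"
      using assms unfolding one_ereal_def ereal_tendsto_simps
      by (auto intro!: tendsto_eq_intros)
  qed
  then show ?thesis by (simp add: zero_ereal_def one_ereal_def)
qed

lemma rpow_c_deriv:
  assumes x: "x > 0"
  shows "((\<lambda>x. rpow_c x s) has_vector_derivative (s * rpow_c x s / of_real x)) (at x)"
proof -
  have d: "((\<lambda>z. exp (s * ln z)) has_field_derivative (exp (s * ln (of_real x)) * (s * inverse (of_real x)))) (at (of_real x))"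
    using x by (auto intro!: derivative_eq_intros simp: complex_nonpos_Reals_iff)
  have "((\<lambda>y. exp (s * ln (of_real y))) has_vector_derivative (exp (s * ln (of_real x)) * (s * inverse (of_real x)))) (at x)"
    by (rule has_vector_derivative_real_field[OF d])
  then have "((\<lambda>y. exp (s * ln (of_real y))) has_vector_derivative (s * rpow_c x s / of_real x)) (at x)"
    using x by (simp add: rpow_c_def Ln_of_real field_simps)
  then show ?thesis
    by (rule has_vector_derivative_transform_within_open[where S="{0<..}"]) (use x in \<open>auto simp: rpow_c_def Ln_of_real\<close>)
qed

lemma rpow_c_add: "x > 0 \<Longrightarrow> rpow_c x (s + t) = rpow_c x s * rpow_c x t"
  by (simp add: rpow_c_def ring_distribs exp_add)

lemma rpow_c_one: "x > 0 \<Longrightarrow> rpow_c x 1 = of_real x"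
  by (simp add: rpow_c_def exp_of_real)

lemma rpow_c_cnj: "cnj (rpow_c x s) = rpow_c x (cnj s)"
  by (simp add: rpow_c_def exp_cnj)

lemma exp_c_meas[measurable]: "(\<lambda>z::complex. exp z) \<in> borel_measurable borel"
  by (intro borel_measurable_continuous_onI continuous_intros)

lemma rpow_c_meas0: "(\<lambda>x. rpow_c x s) \<in> borel_measurable borel"
proof -
  have "(\<lambda>x::real. s * complex_of_real (ln x)) \<in> borel_measurable borel" by measurable
  from measurable_compose[OF this exp_c_meas] show ?thesis by (simp add: rpow_c_def o_def)
qed

lemma rpow_c_meas: assumes [measurable]: "A \<in> sets borel" shows "set_borel_measurable lborel A (\<lambda>x. rpow_c x s)"
  unfolding set_borel_measurable_def using rpow_c_meas0 by measurable

lemma cpow_int: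
  assumes s: "Re s > -1"
  shows "set_integrable lborel {0<..1} (\<lambda>x. rpow_c x s)"
    and "(LINT x:{0<..1}|lborel. rpow_c x s) = 1/(s+1)"
proof -
  have i0: "set_integrable lborel {0<..<1} (\<lambda>x. rpow_c x s)"
  proof (rule set_integrable_bound[OF real_pow_int[of "Re s"] rpow_c_meas[of "{0<..<1}"]])
    show "{0<..<1::real} \<in> sets borel" by simp
    show "-1 < Re s" using s by simp
    show "AE x in lborel. x \<in> {0<..<1} \<longrightarrow> norm (rpow_c x s) \<le> norm (x powr Re s)"
      by (auto simp: rpow_c_pos_norm)
  qed
  have eq: "set_integrable lborel {0<..1} f = set_integrable lborel {0<..<1} f" for f :: "real \<Rightarrow> complex"
    by (rule set_integrable_discrete_difference[where X="{1}"]) auto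
  show "set_integrable lborel {0<..1} (\<lambda>x. rpow_c x s)" using i0 eq by simp
  have s1: "s + 1 \<noteq> 0" using s by (auto simp: complex_eq_iff)
  have "(LBINT x=0..1. rpow_c x s) = 1/(s+1) - 0"
  proof (rule interval_integral_FTC_integrable[where F="\<lambda>x. rpow_c x (s+1) / (s+1)"])
    show "(0::ereal) < 1" by simp
    fix x :: real assume "0 < ereal x" "ereal x < 1"
    then have x: "0 < x" by (simp_all add: zero_ereal_def)
    have "((\<lambda>x. rpow_c x (s+1) / (s+1)) has_vector_derivative ((s+1) * rpow_c x (s+1) / of_real x) / (s+1)) (at x)"
      using rpow_c_deriv[OF x, of "s+1"] by (intro derivative_eq_intros) auto
    then show "((\<lambda>x. rpow_c x (s+1) / (s+1)) has_vector_derivative rpow_c x s) (at x)"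
      using x s1 by (simp add: rpow_c_add rpow_c_one)
    show "isCont (\<lambda>x. rpow_c x s) x"
      using x unfolding rpow_c_def by (auto intro!: continuous_intros)
  next
    show "set_integrable lborel (einterval 0 1) (\<lambda>x. rpow_c x s)"
      using i0 by (simp add: zero_ereal_def one_ereal_def)
    show "(((\<lambda>x. rpow_c x (s+1) / (s+1)) \<circ> real_of_ereal) \<longlongrightarrow> 0) (at_right 0)"
      unfolding zero_ereal_def ereal_tendsto_simps
    proof -
      have l: "((\<lambda>x. x powr (Re s + 1) / cmod (s+1)) \<longlongrightarrow> 0) (at_right 0)"
        using s s1 by (auto intro!: tendsto_eq_intros eventually_at_rightI[of 0 1])
      have "eventually (\<lambda>x. x powr (Re s + 1) / cmod (s+1) = norm (rpow_c x (s+1) / (s+1))) (at_right (0::real))"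
        by (rule eventually_at_rightI[of 0 1]) (auto simp: rpow_c_pos_norm norm_divide)
      from Lim_transform_eventually[OF l this] show "((\<lambda>x. rpow_c x (s+1) / (s+1)) \<longlongrightarrow> 0) (at_right 0)"
        by (simp add: tendsto_norm_zero_iff)
    qed
    show "(((\<lambda>x. rpow_c x (s+1) / (s+1)) \<circ> real_of_ereal) \<longlongrightarrow> 1/(s+1)) (at_left 1)"
      unfolding one_ereal_def ereal_tendsto_simps
    proof -
      have "isCont (\<lambda>x. rpow_c x (s+1) / (s+1)) 1"
        using s1 unfolding rpow_c_def by (auto intro!: continuous_intros)
      then have "((\<lambda>x. rpow_c x (s+1) / (s+1)) \<longlongrightarrow> rpow_c 1 (s+1) / (s+1)) (at_left 1)"
        by (simp add: isCont_def filterlim_at_split)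
      then show "((\<lambda>x. rpow_c x (s+1) / (s+1)) \<longlongrightarrow> 1/(s+1)) (at_left 1)"
        by (simp add: rpow_c_def)
    qed
  qed
  then show "(LINT x:{0<..1}|lborel. rpow_c x s) = 1/(s+1)"
    using interval_integral_Ioc[of 0 1 "\<lambda>x. rpow_c x s"] by (simp add: zero_ereal_def[symmetric] one_ereal_def[symmetric])
qed

definition ipg :: "nat \<Rightarrow> (nat\<Rightarrow>complex) \<Rightarrow> (nat\<Rightarrow>complex) \<Rightarrow> (nat\<Rightarrow>complex) \<Rightarrow> complex" where
  "ipg n lam c d = (\<Sum>j=1..n. \<Sum>k=1..n. c j * cnj (d k) / (1 + lam j + cnj (lam k)))"

lemma set_int_sum:
  fixes f :: "'i \<Rightarrow> real \<Rightarrow> complex"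
  assumes "finite I" "\<And>i. i \<in> I \<Longrightarrow> set_integrable M A (f i)"
  shows "set_integrable M A (\<lambda>x. \<Sum>i\<in>I. f i x) \<and> (LINT x:A|M. (\<Sum>i\<in>I. f i x)) = (\<Sum>i\<in>I. LINT x:A|M. f i x)"
proof -
  have e: "(\<lambda>x. indicat_real A x *\<^sub>R (\<Sum>i\<in>I. f i x)) = (\<lambda>x. \<Sum>i\<in>I. indicat_real A x *\<^sub>R f i x)"
    by (rule ext) (rule scaleR_sum_right)
  show ?thesis using assms unfolding set_integrable_def set_lebesgue_integral_def e
    using Bochner_Integration.integral_sum[where I=I and M=M and f="\<lambda>i x. indicat_real A x *\<^sub>R f i x"] Bochner_Integration.integrable_sum[where I=I and M=M and f="\<lambda>i x. indicat_real A x *\<^sub>R f i x"]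
    by blast
qed

lemma muntz_prod:
  assumes "x > 0"
  shows "muntz n c lam x * cnj (muntz n d lam x) =
    (\<Sum>j=1..n. \<Sum>k=1..n. c j * cnj (d k) * rpow_c x (lam j + cnj (lam k)))"
  using assms
  by (simp add: muntz_def sum_product cnj_sum rpow_c_cnj rpow_c_add mult_ac)

lemma gram:
  assumes re: "\<forall>j\<in>{1..n}. Re (lam j) > -1/2"
  shows "set_integrable lborel {0<..1} (\<lambda>x. muntz n c lam x * cnj (muntz n d lam x))"
    and "(LINT x:{0<..1}|lborel. muntz n c lam x * cnj (muntz n d lam x)) = ipg n lam c d"
proof -
  let ?g = "\<lambda>x. \<Sum>j=1..n. \<Sum>k=1..n. c j * cnj (d k) * rpow_c x (lam j + cnj (lam k))"
  have pw: "Re (lam j + cnj (lam k)) > -1" if "j \<in> {1..n}" "k \<in> {1..n}" for j k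
  proof -
    have "Re (lam j) > -1/2" "Re (lam k) > -1/2" using re that by auto
    then show ?thesis by simp
  qed
  have one: "set_integrable lborel {0<..1} (\<lambda>x. c j * cnj (d k) * rpow_c x (lam j + cnj (lam k))) \<and>
     (LINT x:{0<..1}|lborel. c j * cnj (d k) * rpow_c x (lam j + cnj (lam k))) = c j * cnj (d k) / (1 + lam j + cnj (lam k))"
    if "j \<in> {1..n}" "k \<in> {1..n}" for j k
    using cpow_int[OF pw[OF that]] by (simp add: add_ac)
  have inner: "set_integrable lborel {0<..1} (\<lambda>x. \<Sum>k=1..n. c j * cnj (d k) * rpow_c x (lam j + cnj (lam k))) \<and>
     (LINT x:{0<..1}|lborel. \<Sum>k=1..n. c j * cnj (d k) * rpow_c x (lam j + cnj (lam k))) = (\<Sum>k=1..n. c j * cnj (d k) / (1 + lam j + cnj (lam k)))"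
    if "j \<in> {1..n}" for j
    using set_int_sum[of "{1..n}" lborel "{0<..1}" "\<lambda>k x. c j * cnj (d k) * rpow_c x (lam j + cnj (lam k))"] one[OF that]
    by simp
  have outer: "set_integrable lborel {0<..1} ?g \<and> (LINT x:{0<..1}|lborel. ?g x) = ipg n lam c d"
    using set_int_sum[of "{1..n}" lborel "{0<..1}" "\<lambda>j x. \<Sum>k=1..n. c j * cnj (d k) * rpow_c x (lam j + cnj (lam k))"] inner
    by (simp add: ipg_def)
  have eqA: "\<And>x. x \<in> {0<..1} \<Longrightarrow> muntz n c lam x * cnj (muntz n d lam x) = ?g x"
    using muntz_prod by auto
  show "set_integrable lborel {0<..1} (\<lambda>x. muntz n c lam x * cnj (muntz n d lam x))"
  proof -
    have "set_integrable lborel {0<..1} (\<lambda>x. muntz n c lam x * cnj (muntz n d lam x)) = set_integrable lborel {0<..1} ?g"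
      by (rule set_integrable_cong) (auto simp: eqA)
    then show ?thesis using outer by simp
  qed
  show "(LINT x:{0<..1}|lborel. muntz n c lam x * cnj (muntz n d lam x)) = ipg n lam c d"
  proof -
    have "(LINT x:{0<..1}|lborel. muntz n c lam x * cnj (muntz n d lam x)) = (LINT x:{0<..1}|lborel. ?g x)"
      by (rule set_lebesgue_integral_cong) (auto simp: eqA)
    then show ?thesis using outer by simp
  qed
qed

lemma L2_muntz:
  assumes re: "\<forall>j\<in>{1..n}. Re (lam j) > -1/2"
  shows "L2_norm01 (muntz n c lam) = sqrt (Re (ipg n lam c c))"
    and "Re (ipg n lam c c) \<ge> 0" and "ipg n lam c c = of_real (Re (ipg n lam c c))"
proof -
  have "complex_of_real (LINT x:{0<..1}|lborel. (cmod (muntz n c lam x))^2)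
      = (LINT x:{0<..1}|lborel. complex_of_real ((cmod (muntz n c lam x))^2))"
    by (rule set_integral_complex_of_real[symmetric])
  also have "\<dots> = (LINT x:{0<..1}|lborel. muntz n c lam x * cnj (muntz n c lam x))"
    by (simp only: complex_norm_square)
  also have "\<dots> = ipg n lam c c" by (rule gram(2)[OF re])
  finally have e: "complex_of_real (LINT x:{0<..1}|lborel. (cmod (muntz n c lam x))^2) = ipg n lam c c" .
  then show "L2_norm01 (muntz n c lam) = sqrt (Re (ipg n lam c c))"
    unfolding L2_norm01_def by (metis Re_complex_of_real)
  have "(LINT x:{0<..1}|lborel. (cmod (muntz n c lam x))^2) \<ge> 0"
    unfolding set_lebesgue_integral_def by (rule integral_nonneg_AE) (auto simp: indicator_def)
  then show "Re (ipg n lam c c) \<ge> 0" using e by (metis Re_complex_of_real)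
  show "ipg n lam c c = of_real (Re (ipg n lam c c))" using e by (metis Re_complex_of_real)
qed

lemma cs2: fixes A B x y :: real assumes "A \<ge> 0" "B \<ge> 0"
  shows "(sqrt A * x + sqrt B * y)^2 \<le> (A + B) * (x^2 + y^2)"
proof -
  have "0 \<le> (sqrt A * y - sqrt B * x)^2" by simp
  then show ?thesis using assms by (simp add: power2_eq_square algebra_simps)
qed

lemma num1: fixes M S T x y :: real
  assumes "M \<ge> 0" "S \<ge> 0" "T \<ge> 0" "x \<ge> 0" "y \<ge> 0"
  shows "((M + sqrt S) * x + sqrt T * y)^2 + M^2 * y^2 \<le> (M + sqrt (S + T))^2 * (x^2 + y^2)"
proof -
  define N where "N = sqrt (x^2 + y^2)"
  define u where "u = sqrt S * x + sqrt T * y"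
  have N2: "N^2 = x^2 + y^2" by (simp add: N_def)
  have xN: "x \<le> N" unfolding N_def by (rule real_le_rsqrt) simp
  have u0: "u \<ge> 0" using assms by (simp add: u_def)
  have "u^2 \<le> (sqrt (S+T) * N)^2" using cs2[OF assms(2,3), of x y] assms by (simp add: u_def power_mult_distrib N2)
  then have uN: "u \<le> sqrt (S+T) * N" using u0 assms by (simp add: N_def power2_le_iff_abs_le)
  have "((M + sqrt S) * x + sqrt T * y)^2 + M^2 * y^2 = M^2 * N^2 + 2 * M * x * u + u^2"
    unfolding N2 u_def by (simp add: power2_eq_square algebra_simps)
  also have "\<dots> \<le> M^2 * N^2 + 2 * M * N * u + u^2"
    using xN u0 assms by (simp add: mult_right_mono mult_left_mono)
  also have "\<dots> = (M * N + u)^2" by (simp add: power2_eq_square algebra_simps)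
  also have "\<dots> \<le> (M * N + sqrt (S+T) * N)^2"
    using uN u0 assms by (intro power_mono) (auto simp: N_def)
  also have "\<dots> = (M + sqrt (S + T))^2 * N^2"
    by (simp only: power2_eq_square algebra_simps)
  also have "\<dots> = (M + sqrt (S + T))^2 * (x^2 + y^2)" by (simp only: N2)
  finally show ?thesis .
qed

lemma Ssuc: fixes a :: "nat \<Rightarrow> real"
  shows "(\<Sum>j=1..Suc m. a j * (\<Sum>k=j+1..Suc m. a k)) = (\<Sum>j=1..m. a j * (\<Sum>k=j+1..m. a k)) + a (Suc m) * (\<Sum>j=1..m. a j)"
proof -
  have "(\<Sum>j=1..Suc m. a j * (\<Sum>k=j+1..Suc m. a k)) = (\<Sum>j=1..m. a j * (\<Sum>k=j+1..Suc m. a k))"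
    by (simp add: sum.cl_ivl_Suc)
  also have "\<dots> = (\<Sum>j=1..m. a j * (\<Sum>k=j+1..m. a k) + a j * a (Suc m))"
    by (intro sum.cong refl) (simp add: sum.cl_ivl_Suc algebra_simps)
  also have "\<dots> = (\<Sum>j=1..m. a j * (\<Sum>k=j+1..m. a k)) + a (Suc m) * (\<Sum>j=1..m. a j)"
    by (simp add: sum.distrib sum_distrib_left mult.commute)
  finally show ?thesis .
qed

locale mz =
  fixes n :: nat and lam :: "nat \<Rightarrow> complex"
  assumes re: "\<forall>j\<in>{1..n}. Re (lam j) > -1/2"
    and psd: "\<And>c. Re (ipg n lam c c) \<ge> 0"
begin

abbreviation "ip \<equiv> ipg n lam"
definition nq :: "(nat\<Rightarrow>complex) \<Rightarrow> real" where "nq c = Re (ip c c)"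
definition Tm :: "(nat\<Rightarrow>complex) \<Rightarrow> nat \<Rightarrow> complex" where "Tm c = (\<lambda>j. lam j * c j)"
definition ev :: "(nat\<Rightarrow>complex) \<Rightarrow> complex" where "ev c = (\<Sum>j=1..n. c j)"
definition W :: "nat \<Rightarrow> (nat\<Rightarrow>complex) set" where "W m = {c. \<forall>j\<in>{1..n}. m < j \<longrightarrow> c j = 0}"

lemma ip_add_l: "ip (\<lambda>j. c j + d j) e = ip c e + ip d e"
  by (simp add: ipg_def ring_distribs add_divide_distrib sum.distrib)
lemma ip_add_r: "ip e (\<lambda>j. c j + d j) = ip e c + ip e d"
  by (simp add: ipg_def ring_distribs add_divide_distrib sum.distrib)
lemma ip_scal_l: "ip (\<lambda>j. b * c j) d = b * ip c d"
  by (simp add: ipg_def sum_distrib_left mult_ac)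
lemma ip_scal_r: "ip c (\<lambda>j. b * d j) = cnj b * ip c d"
  by (simp add: ipg_def sum_distrib_left mult_ac)
lemma ip_sym: "ip d c = cnj (ip c d)"
  unfolding ipg_def cnj_sum by (subst sum.swap) (simp add: add_ac mult.commute)
lemma ip_diff_l: "ip (\<lambda>j. c j - d j) e = ip c e - ip d e"
  by (simp add: ipg_def ring_distribs diff_divide_distrib sum_subtractf)
lemma ip_diff_r: "ip e (\<lambda>j. c j - d j) = ip e c - ip e d"
  by (simp add: ipg_def ring_distribs diff_divide_distrib sum_subtractf)
lemma ip_zero_r: "\<forall>j\<in>{1..n}. d j = 0 \<Longrightarrow> ip c d = 0"
  by (simp add: ipg_def)
lemma ip_zero_l: "\<forall>j\<in>{1..n}. d j = 0 \<Longrightarrow> ip d c = 0"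
  by (simp add: ipg_def)
lemma ip_real: "ip c c = of_real (nq c)"
  using ip_sym[of c c] unfolding nq_def by (simp add: complex_eq_iff)
lemma nq_nonneg: "nq c \<ge> 0" using psd unfolding nq_def .

lemma ident: "ip (Tm c) d + ip c (Tm d) + ip c d = ev c * cnj (ev d)"
proof -
  have nz: "1 + lam j + cnj (lam k) \<noteq> 0" if "j \<in> {1..n}" "k \<in> {1..n}" for j k
  proof -
    have "Re (lam j) > -1/2" "Re (lam k) > -1/2" using re that by auto
    then have "Re (1 + lam j + cnj (lam k)) > 0" by simp
    then show ?thesis by (metis zero_complex.sel(1) order_less_irrefl)
  qed
  have "ip (Tm c) d + ip c (Tm d) + ip c d =
     (\<Sum>j=1..n. \<Sum>k=1..n. lam j * c j * cnj (d k) / (1 + lam j + cnj (lam k)) + c j * cnj (lam k * d k) / (1 + lam j + cnj (lam k))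
        + c j * cnj (d k) / (1 + lam j + cnj (lam k)))"
    unfolding ipg_def Tm_def sum.distrib[symmetric] ..
  also have "\<dots> = (\<Sum>j=1..n. \<Sum>k=1..n. c j * cnj (d k))"
  proof (intro sum.cong refl)
    fix j k assume "j \<in> {1..n}" "k \<in> {1..n}"
    define D where "D = 1 + lam j + cnj (lam k)"
    have D: "D \<noteq> 0" using nz[OF \<open>j \<in> _\<close> \<open>k \<in> _\<close>] by (simp add: D_def)
    have e: "lam j * c j * cnj (d k) + c j * cnj (lam k * d k) + c j * cnj (d k) = (c j * cnj (d k)) * D"
      by (simp add: D_def algebra_simps)
    have "lam j * c j * cnj (d k) / D + c j * cnj (lam k * d k) / D + c j * cnj (d k) / D
       = (lam j * c j * cnj (d k) + c j * cnj (lam k * d k) + c j * cnj (d k)) / D"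
      by (simp add: add_divide_distrib)
    also have "\<dots> = c j * cnj (d k)" using D by (simp only: e) simp
    finally show "lam j * c j * cnj (d k) / (1 + lam j + cnj (lam k)) + c j * cnj (lam k * d k) / (1 + lam j + cnj (lam k))
        + c j * cnj (d k) / (1 + lam j + cnj (lam k)) = c j * cnj (d k)" by (simp add: D_def)
  qed
  also have "\<dots> = ev c * cnj (ev d)"
    by (simp add: ev_def sum_product cnj_sum)
  finally show ?thesis .
qed


lemma expand: "nq (\<lambda>j. c j + t * d j) = nq c + 2 * Re (cnj t * ip c d) + (cmod t)^2 * nq d"
proof -
  have "ip (\<lambda>j. c j + t * d j) (\<lambda>j. c j + t * d j) = ip c c + cnj t * ip c d + t * cnj (ip c d) + (t * cnj t) * ip d d"
    by (simp add: ip_add_l ip_add_r ip_scal_l ip_scal_r ip_sym[of d c] algebra_simps)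
  moreover have "Re (t * cnj (ip c d)) = Re (cnj t * ip c d)" by simp
  moreover have "Re ((t * cnj t) * ip d d) = (cmod t)^2 * nq d"
    by (simp add: ip_real[of d] complex_norm_square[symmetric])
  ultimately show ?thesis unfolding nq_def by simp
qed

lemma CS: "(cmod (ip c d))^2 \<le> nq c * nq d"
proof (cases "nq d = 0")
  case True
  show ?thesis
  proof (rule ccontr)
    assume "\<not> ?thesis"
    then have z: "cmod (ip c d) > 0" using True by (simp add: nq_nonneg)
    define s where "s = (nq c + 1) / (2 * (cmod (ip c d))^2)"
    have "0 \<le> nq (\<lambda>j. c j + (- of_real s * ip c d) * d j)" by (rule nq_nonneg)
    also have "\<dots> = nq c + 2 * Re (cnj (- of_real s * ip c d) * ip c d)"
      using True expand[of c "- of_real s * ip c d" d] by simp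
    also have "Re (cnj (- of_real s * ip c d) * ip c d) = - s * (cmod (ip c d))^2"
      using cmod_power2[of "ip c d"] by (simp add: power2_eq_square algebra_simps)
    finally have A: "0 \<le> nq c + 2 * (- s * (cmod (ip c d))^2)" .
    have "s * (cmod (ip c d))^2 = (nq c + 1) / 2" using z by (simp add: s_def)
    with A show False by simp
  qed
next
  case False
  then have B: "nq d > 0" using nq_nonneg[of d] by simp
  define tt where "tt = - ip c d / of_real (nq d)"
  have "0 \<le> nq (\<lambda>j. c j + tt * d j)" by (rule nq_nonneg)
  also have "\<dots> = nq c + 2 * Re (cnj tt * ip c d) + (cmod tt)^2 * nq d" by (rule expand)
  also have "Re (cnj tt * ip c d) = -((cmod (ip c d))^2 / nq d)"
    using cmod_power2[of "ip c d"] by (simp add: tt_def power2_eq_square)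
  also have "(cmod tt)^2 * nq d = (cmod (ip c d))^2 / nq d"
    using B by (simp add: tt_def norm_divide power2_eq_square)
  finally have "(cmod (ip c d))^2 / nq d \<le> nq c" by simp
  then show ?thesis using B by (simp add: field_simps)
qed

lemma CS0: "nq d = 0 \<Longrightarrow> ip c d = 0"
  using CS[of c d] by simp

lemma tri: "sqrt (nq (\<lambda>j. c j + d j)) \<le> sqrt (nq c) + sqrt (nq d)"
proof -
  have "nq (\<lambda>j. c j + d j) = nq c + 2 * Re (ip c d) + nq d"
    using expand[of c 1 d] by simp
  also have "Re (ip c d) \<le> cmod (ip c d)" by (rule complex_Re_le_cmod)
  also have "cmod (ip c d) \<le> sqrt (nq c) * sqrt (nq d)"
    using CS[of c d] nq_nonneg[of c] nq_nonneg[of d]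
    by (metis real_le_rsqrt real_sqrt_mult norm_ge_zero)
  finally have "nq (\<lambda>j. c j + d j) \<le> (sqrt (nq c) + sqrt (nq d))^2"
    using nq_nonneg[of c] nq_nonneg[of d] by (simp add: power2_sum)
  then show ?thesis
    using nq_nonneg[of c] nq_nonneg[of d] real_le_lsqrt by (metis add_nonneg_nonneg real_sqrt_ge_zero)
qed

lemma nq_scal: "nq (\<lambda>j. b * c j) = (cmod b)^2 * nq c"
  unfolding nq_def by (simp add: ip_scal_l ip_scal_r ip_real[of c] mult.assoc[symmetric] complex_norm_square[symmetric])

lemma W_add: "c \<in> W m \<Longrightarrow> d \<in> W m \<Longrightarrow> (\<lambda>j. c j + d j) \<in> W m" by (auto simp: W_def)
lemma W_scal: "c \<in> W m \<Longrightarrow> (\<lambda>j. b * c j) \<in> W m" by (auto simp: W_def)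
lemma W_diff: "c \<in> W m \<Longrightarrow> d \<in> W m \<Longrightarrow> (\<lambda>j. c j - d j) \<in> W m" by (auto simp: W_def)
lemma W_Tm: "c \<in> W m \<Longrightarrow> Tm c \<in> W m" by (simp add: W_def Tm_def)
lemma W_mono: "c \<in> W m \<Longrightarrow> m \<le> m' \<Longrightarrow> c \<in> W m'" by (auto simp: W_def)

lemma proj: "\<exists>q\<in>W m. \<forall>g\<in>W m. ip (\<lambda>j. f j - q j) g = 0"
proof (induction m arbitrary: f)
  case 0
  show ?case by (rule bexI[of _ "\<lambda>j. 0"]) (auto simp: W_def intro!: ip_zero_r)
next
  case (Suc m)
  show ?case
  proof (cases "n \<le> m")
    case True
    then have "W (Suc m) = W m" by (auto simp: W_def)
    then show ?thesis using Suc.IH[of f] by simp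
  next
  case False
  then have mn: "Suc m \<in> {1..n}" by simp
  define \<delta> where "\<delta> = (\<lambda>j. if j = Suc m then 1 else (0::complex))"
  obtain p where p: "p \<in> W m" "\<forall>g\<in>W m. ip (\<lambda>j. \<delta> j - p j) g = 0" using Suc.IH by blast
  define u where "u = (\<lambda>j. \<delta> j - p j)"
  have uW: "u \<in> W (Suc m)" using p(1) by (auto simp: W_def u_def \<delta>_def)
  have u1: "u (Suc m) = 1" using p(1) mn by (auto simp: W_def u_def \<delta>_def)
  have uo: "\<forall>g\<in>W m. ip u g = 0" using p(2) by (simp add: u_def)
  obtain q' where q': "q' \<in> W m" "\<forall>g\<in>W m. ip (\<lambda>j. f j - q' j) g = 0" using Suc.IH by blast
  define \<alpha> where "\<alpha> = (if nq u = 0 then 0 else ip (\<lambda>j. f j - q' j) u / of_real (nq u))"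
  define q where "q = (\<lambda>j. q' j + \<alpha> * u j)"
  have qW: "q \<in> W (Suc m)" unfolding q_def
    by (intro W_add W_scal uW W_mono[OF q'(1)]) simp
  have fq: "(\<lambda>j. f j - q j) = (\<lambda>j. (f j - q' j) - \<alpha> * u j)" by (auto simp: q_def)
  have o1: "ip (\<lambda>j. f j - q j) h = 0" if "h \<in> W m" for h
  proof -
    have "ip u h = 0" using uo that by blast
    then show ?thesis using q'(2) that unfolding fq by (simp add: ip_diff_l ip_scal_l)
  qed
  have o2: "ip (\<lambda>j. f j - q j) u = 0"
  proof (cases "nq u = 0")
    case True
    then show ?thesis unfolding fq by (simp only: ip_diff_l ip_scal_l) (simp add: \<alpha>_def CS0)
  next
    case False
    then show ?thesis unfolding fq by (simp only: ip_diff_l ip_scal_l) (simp add: \<alpha>_def ip_real[of u] ip_diff_l)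
  qed
  show ?thesis
  proof (rule bexI[OF _ qW], intro ballI)
    fix g assume g: "g \<in> W (Suc m)"
    define h where "h = (\<lambda>j. g j - g (Suc m) * u j)"
    have hW: "h \<in> W m" unfolding W_def h_def
    proof (intro CollectI ballI impI)
      fix j assume j: "j \<in> {1..n}" "m < j"
      show "g j - g (Suc m) * u j = 0"
      proof (cases "j = Suc m")
        case True then show ?thesis using u1 by simp
      next
        case False then have "Suc m < j" using j by simp
        then show ?thesis using g uW j by (simp add: W_def)
      qed
    qed
    have "g = (\<lambda>j. h j + g (Suc m) * u j)" by (simp add: h_def)
    then have "ip (\<lambda>j. f j - q j) g = ip (\<lambda>j. f j - q j) h + cnj (g (Suc m)) * ip (\<lambda>j. f j - q j) u"
      by (metis ip_add_r ip_scal_r)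
    then show "ip (\<lambda>j. f j - q j) g = 0" using o1[OF hW] o2 by simp
  qed
  qed
qed


definition Kf :: "nat \<Rightarrow> real" where "Kf m = (\<Sum>j=1..m. 1 + 2 * Re (lam j))"
definition Sf :: "nat \<Rightarrow> real" where "Sf m = (\<Sum>j=1..m. (1 + 2 * Re (lam j)) * (\<Sum>k=j+1..m. (1 + 2 * Re (lam k))))"

lemma a_pos: assumes "j \<in> {1..n}" shows "1 + 2 * Re (lam j) > 0"
proof -
  have "Re (lam j) > -1/2" using re assms by blast
  then show ?thesis by linarith
qed

lemma a_nonneg: assumes "m \<le> n" "j \<in> {1..m}" shows "1 + 2 * Re (lam j) \<ge> 0"
proof -
  have "j \<in> {1..n}" using assms by auto
  from a_pos[OF this] show ?thesis by linarith
qed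

lemma Kf_nonneg: "m \<le> n \<Longrightarrow> Kf m \<ge> 0"
  unfolding Kf_def by (intro sum_nonneg a_nonneg)

lemma Sf_nonneg: "m \<le> n \<Longrightarrow> Sf m \<ge> 0"
  unfolding Sf_def
proof (intro sum_nonneg mult_nonneg_nonneg)
  fix j k assume mn: "m \<le> n" and j: "j \<in> {1..m}"
  then show "0 \<le> 1 + 2 * Re (lam j)" by (rule a_nonneg)
  assume k: "k \<in> {j + 1..m}"
  have "k \<in> {1..m}" using j k by simp
  then show "0 \<le> 1 + 2 * Re (lam k)" using mn by (intro a_nonneg)
qed

lemma Sf_Suc: "Sf (Suc m) = Sf m + (1 + 2 * Re (lam (Suc m))) * Kf m"
  unfolding Sf_def Kf_def by (rule Ssuc)

lemma Kf_Suc: "Kf (Suc m) = Kf m + (1 + 2 * Re (lam (Suc m)))"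
  unfolding Kf_def by simp

lemma ev_lin: "ev (\<lambda>j. c j + b * d j) = ev c + b * ev d"
  by (simp add: ev_def sum.distrib sum_distrib_left)

lemma W0: "c \<in> W 0 \<Longrightarrow> \<forall>j\<in>{1..n}. c j = 0" by (auto simp: W_def)

lemma pyth: assumes "h \<in> W m" "\<forall>g\<in>W m. ip u g = 0"
  shows "nq (\<lambda>j. h j + b * u j) = nq h + (cmod b)^2 * nq u"
proof -
  have "ip u h = 0" using assms by blast
  then have "ip h u = 0" using ip_sym[of h u] by simp
  then show ?thesis by (simp add: expand)
qed

lemma main:
  assumes M: "M \<ge> 0" "\<forall>j\<in>{1..n}. cmod (lam j) \<le> M"
  shows "m \<le> n \<Longrightarrow> \<forall>c\<in>W m. nq (Tm c) \<le> (M + sqrt (Sf m))^2 * nq c \<and> (cmod (ev c))^2 \<le> Kf m * nq c"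
proof (induction m)
  case 0
  show ?case
  proof
    fix c assume c: "c \<in> W 0"
    have "Tm c \<in> W 0" using c by (rule W_Tm)
    then have "ip (Tm c) (Tm c) = 0" using W0 by (intro ip_zero_r) blast
    then have "nq (Tm c) = 0" unfolding nq_def by simp
    moreover have "ev c = 0" using W0[OF c] by (simp add: ev_def)
    ultimately show "nq (Tm c) \<le> (M + sqrt (Sf 0))^2 * nq c \<and> (cmod (ev c))^2 \<le> Kf 0 * nq c"
      using nq_nonneg[of c] by (simp add: Kf_def)
  qed
next
  case (Suc m)
  then have mn: "m \<le> n" "Suc m \<in> {1..n}" by auto
  note IH = Suc.IH[OF mn(1)]
  define a where "a = 1 + 2 * Re (lam (Suc m))"
  have a0: "a > 0" using a_pos[OF mn(2)] by (simp add: a_def)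
  define K where "K = Kf m"
  define S where "S = Sf m"
  have K0: "K \<ge> 0" using Kf_nonneg[OF mn(1)] by (simp add: K_def)
  have S0: "S \<ge> 0" using Sf_nonneg[OF mn(1)] by (simp add: S_def)
  define \<delta> where "\<delta> = (\<lambda>j. if j = Suc m then 1 else (0::complex))"
  obtain p where p: "p \<in> W m" "\<forall>g\<in>W m. ip (\<lambda>j. \<delta> j - p j) g = 0" using proj[of m \<delta>] by blast
  define u where "u = (\<lambda>j. \<delta> j - p j)"
  have uW: "u \<in> W (Suc m)" using p(1) by (auto simp: W_def u_def \<delta>_def)
  have u1: "u (Suc m) = 1" using p(1) mn by (auto simp: W_def u_def \<delta>_def)
  have uo: "\<forall>g\<in>W m. ip u g = 0" using p(2) by (simp add: u_def)
  have uo': "ip g u = 0" if "g \<in> W m" for g using uo that ip_sym[of g u] by simp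
  define r where "r = nq u"
  have r0: "r \<ge> 0" by (simp add: r_def nq_nonneg)
  define L where "L = lam (Suc m)"
  define w where "w = (\<lambda>j. (lam j - L) * u j)"
  have wW: "w \<in> W m" unfolding W_def w_def
  proof (intro CollectI ballI impI)
    fix j assume j: "j \<in> {1..n}" "m < j"
    show "(lam j - L) * u j = 0"
    proof (cases "j = Suc m")
      case True then show ?thesis by (simp add: L_def)
    next
      case False then have "Suc m < j" using j by simp
      then show ?thesis using uW j by (simp add: W_def)
    qed
  qed
  have Tu: "Tm u = (\<lambda>j. w j + L * u j)" unfolding Tm_def w_def by (rule ext) (simp add: algebra_simps)
  have evu: "(cmod (ev u))^2 = a * r"
  proof -
    have e1: "ip (Tm u) u = L * of_real r"
      unfolding Tu ip_add_l ip_scal_l using uo'[OF wW] by (simp add: ip_real r_def)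
    have e2: "ip u (Tm u) = cnj (L * of_real r)"
      using ip_sym[of "Tm u" u] e1 by simp
    have e3: "ip u u = of_real r" by (simp add: ip_real r_def)
    have "complex_of_real ((cmod (ev u))^2) = ev u * cnj (ev u)" by (rule complex_norm_square)
    also have "\<dots> = L * of_real r + cnj (L * of_real r) + of_real r"
      using ident[of u u] e1 e2 e3 by simp
    also have "\<dots> = complex_of_real ((2 * Re L + 1) * r)" by (simp add: complex_eq_iff algebra_simps)
    finally have "(cmod (ev u))^2 = (2 * Re L + 1) * r" by (simp only: of_real_eq_iff)
    then show ?thesis by (simp add: a_def L_def)
  qed
  have nqw: "nq w \<le> a * r * K"
  proof -
    have "ip (Tm u) w = ip w w"
      unfolding Tu by (simp add: ip_add_l ip_scal_l uo wW)
    moreover have "ip u (Tm w) = 0" "ip u w = 0" using W_Tm[OF wW] uo wW by auto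
    ultimately have e: "ip w w = ev u * cnj (ev w)" using ident[of u w] by simp
    have "nq w = Re (ev u * cnj (ev w))" using e by (simp add: nq_def)
    also have "\<dots> \<le> cmod (ev u) * cmod (ev w)"
      using complex_Re_le_cmod[of "ev u * cnj (ev w)"] by (simp add: norm_mult)
    finally have le: "nq w \<le> cmod (ev u) * cmod (ev w)" .
    have ew: "(cmod (ev w))^2 \<le> K * nq w" using IH wW by (simp add: K_def)
    have "(nq w)^2 \<le> (cmod (ev u))^2 * (cmod (ev w))^2"
      using power_mono[OF le nq_nonneg[of w], of 2] by (simp add: power_mult_distrib)
    also have "\<dots> \<le> (a * r) * (K * nq w)"
      using evu ew a0 r0 by (simp add: mult_left_mono)
    finally have "nq w * nq w \<le> (a * r * K) * nq w" by (simp add: power2_eq_square algebra_simps)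
    then show ?thesis using nq_nonneg[of w] a0 r0 K0
      by (cases "nq w = 0") (auto simp: mult_le_cancel_right)
  qed
  show ?case
  proof
    fix c assume c: "c \<in> W (Suc m)"
    define g where "g = c (Suc m)"
    define Q where "Q = (\<lambda>j. c j - g * u j)"
    have QW: "Q \<in> W m" unfolding W_def Q_def
    proof (intro CollectI ballI impI)
      fix j assume j: "j \<in> {1..n}" "m < j"
      show "c j - g * u j = 0"
      proof (cases "j = Suc m")
        case True then show ?thesis using u1 by (simp add: g_def)
      next
        case False then have "Suc m < j" using j by simp
        then show ?thesis using c uW j by (simp add: W_def)
      qed
    qed
    have ceq: "c = (\<lambda>j. Q j + g * u j)" by (simp add: Q_def)
    define A where "A = (\<lambda>j. Tm Q j + g * w j)"
    have AW: "A \<in> W m" unfolding A_def by (intro W_add W_scal W_Tm QW wW)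
    have Tc: "Tm c = (\<lambda>j. A j + (g * L) * u j)"
      by (auto simp: ceq A_def Tm_def w_def algebra_simps)
    have nqc: "nq c = nq Q + (cmod g)^2 * r" unfolding ceq r_def by (rule pyth[OF QW uo])
    have nqTc: "nq (Tm c) = nq A + (cmod (g * L))^2 * r" unfolding Tc r_def by (rule pyth[OF AW uo])
    have IQ: "nq (Tm Q) \<le> (M + sqrt S)^2 * nq Q" "(cmod (ev Q))^2 \<le> K * nq Q"
      using IH QW by (auto simp: S_def K_def)
    define x where "x = sqrt (nq Q)"
    define y where "y = cmod g * sqrt r"
    have x0: "x \<ge> 0" "x^2 = nq Q" using nq_nonneg[of Q] by (auto simp: x_def)
    have y0: "y \<ge> 0" "y^2 = (cmod g)^2 * r" using r0 by (auto simp: y_def power_mult_distrib)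
    have t1: "sqrt (nq A) \<le> sqrt (nq (Tm Q)) + sqrt (nq (\<lambda>j. g * w j))"
      unfolding A_def by (rule tri)
    have t2: "sqrt (nq (Tm Q)) \<le> (M + sqrt S) * x"
    proof -
      have "sqrt (nq (Tm Q)) \<le> sqrt ((M + sqrt S)^2 * nq Q)" using IQ(1) by (rule real_sqrt_le_mono)
      also have "\<dots> = (M + sqrt S) * x" using M S0 by (simp add: real_sqrt_mult x_def)
      finally show ?thesis .
    qed
    have t3: "sqrt (nq (\<lambda>j. g * w j)) \<le> sqrt (a * K) * y"
    proof -
      have "nq (\<lambda>j. g * w j) = (cmod g)^2 * nq w" by (rule nq_scal)
      also have "\<dots> \<le> (cmod g)^2 * (a * r * K)" using nqw by (simp add: mult_left_mono)
      also have "\<dots> = (sqrt (a * K) * y)^2" using a0 K0 r0 by (simp add: y_def power_mult_distrib)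
      finally show ?thesis using a0 K0 y0 by (simp add: real_le_lsqrt)
    qed
    have sA: "sqrt (nq A) \<le> (M + sqrt S) * x + sqrt (a * K) * y" using t1 t2 t3 by linarith
    have "nq A \<le> ((M + sqrt S) * x + sqrt (a * K) * y)^2"
    proof -
      have "(sqrt (nq A))^2 \<le> ((M + sqrt S) * x + sqrt (a * K) * y)^2" by (rule power_mono[OF sA]) (simp add: nq_nonneg)
      then show ?thesis using nq_nonneg[of A] by simp
    qed
    moreover have "(cmod (g * L))^2 * r \<le> M^2 * y^2"
    proof -
      have "cmod L \<le> M" using M(2) mn(2) by (simp add: L_def)
      then have "(cmod L)^2 \<le> M^2" by (simp add: power_mono)
      then have "(cmod L)^2 * ((cmod g)^2 * r) \<le> M^2 * ((cmod g)^2 * r)"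
        using r0 by (intro mult_right_mono) auto
      then show ?thesis using y0 by (simp add: norm_mult power_mult_distrib mult_ac)
    qed
    ultimately have "nq (Tm c) \<le> ((M + sqrt S) * x + sqrt (a * K) * y)^2 + M^2 * y^2"
      using nqTc by simp
    also have "\<dots> \<le> (M + sqrt (S + a * K))^2 * (x^2 + y^2)"
      by (rule num1) (use M a0 K0 S0 x0 y0 in auto)
    also have "\<dots> = (M + sqrt (Sf (Suc m)))^2 * nq c"
      using x0 y0 nqc by (simp add: Sf_Suc S_def K_def a_def)
    finally have part1: "nq (Tm c) \<le> (M + sqrt (Sf (Suc m)))^2 * nq c" .
    have v1: "cmod (ev c) \<le> cmod (ev Q) + cmod g * cmod (ev u)"
      unfolding ceq ev_lin using norm_triangle_ineq[of "ev Q" "g * ev u"] by (simp add: norm_mult)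
    have v2: "cmod (ev Q) \<le> sqrt K * x"
    proof -
      have "cmod (ev Q) = sqrt ((cmod (ev Q))^2)" by simp
      also have "\<dots> \<le> sqrt (K * nq Q)" using IQ(2) by (rule real_sqrt_le_mono)
      also have "\<dots> = sqrt K * x" by (simp add: real_sqrt_mult x_def)
      finally show ?thesis .
    qed
    have v3: "cmod g * cmod (ev u) = sqrt a * y"
    proof -
      have "cmod (ev u) = sqrt ((cmod (ev u))^2)" by simp
      also have "\<dots> = sqrt (a * r)" by (simp only: evu)
      also have "\<dots> = sqrt a * sqrt r" by (simp add: real_sqrt_mult)
      finally show ?thesis by (simp add: y_def mult_ac)
    qed
    have "cmod (ev c) \<le> sqrt K * x + sqrt a * y" using v1 v2 v3 by linarith
    then have "(cmod (ev c))^2 \<le> (sqrt K * x + sqrt a * y)^2" by (rule power_mono) simp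
    also have "\<dots> \<le> (K + a) * (x^2 + y^2)" by (rule cs2) (use K0 a0 in auto)
    also have "\<dots> = Kf (Suc m) * nq c" using x0 y0 nqc by (simp add: Kf_Suc K_def a_def)
    finally show "nq (Tm c) \<le> (M + sqrt (Sf (Suc m)))^2 * nq c \<and> (cmod (ev c))^2 \<le> Kf (Suc m) * nq c"
      using part1 by simp
  qed
qed

end


lemma muntz_deriv:
  assumes x: "x > 0"
  shows "complex_of_real x * vector_derivative (muntz n a lam) (at x) = muntz n (\<lambda>j. lam j * a j) lam x"
proof -
  have d: "(muntz n a lam has_vector_derivative (\<Sum>j=1..n. a j * (lam j * rpow_c x (lam j) / of_real x))) (at x)"
    unfolding muntz_def
    by (intro has_vector_derivative_sum has_vector_derivative_mult_right rpow_c_deriv[OF x])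
  have "vector_derivative (muntz n a lam) (at x) = (\<Sum>j=1..n. a j * (lam j * rpow_c x (lam j) / of_real x))"
    using d by (rule vector_derivative_at)
  then show ?thesis using x
    by (simp add: muntz_def sum_distrib_left mult_ac)
qed

theorem lemma12p12:
  fixes n :: nat and lam a :: "nat \<Rightarrow> complex"
  assumes "n \<ge> 1"
    and "inj_on lam {1..n}"
    and "\<forall>j\<in>{1..n}. Re (lam j) > -1/2"
  shows "L2_norm01 (\<lambda>x. complex_of_real x * vector_derivative (muntz n a lam) (at x))
    \<le> (Max ((\<lambda>j. cmod (lam j)) ` {1..n})
        + sqrt (\<Sum>j=1..n. (1 + 2 * Re (lam j)) * (\<Sum>k=j+1..n. (1 + 2 * Re (lam k)))))
      * L2_norm01 (muntz n a lam)"
proof -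
  note re = assms(3)
  interpret mz n lam
    by unfold_locales (use re L2_muntz(2)[OF re] in auto)
  define M where "M = Max ((\<lambda>j. cmod (lam j)) ` {1..n})"
  have Mb: "\<forall>j\<in>{1..n}. cmod (lam j) \<le> M" unfolding M_def by (intro ballI Max_ge) auto
  have M0: "M \<ge> 0" using Mb assms(1) by (meson atLeastAtMost_iff le_refl norm_ge_zero order_trans)
  have aW: "a \<in> W n" by (simp add: W_def)
  have key: "nq (Tm a) \<le> (M + sqrt (Sf n))^2 * nq a"
    using main[OF M0 Mb le_refl] aW by blast
  have S0: "Sf n \<ge> 0" by (rule Sf_nonneg) simp
  have e1: "L2_norm01 (\<lambda>x. complex_of_real x * vector_derivative (muntz n a lam) (at x))
      = L2_norm01 (muntz n (Tm a) lam)"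
  proof -
    have "(LINT x:{0<..1}|lborel. (cmod (complex_of_real x * vector_derivative (muntz n a lam) (at x)))^2)
        = (LINT x:{0<..1}|lborel. (cmod (muntz n (Tm a) lam x))^2)"
      by (rule set_lebesgue_integral_cong) (auto simp: muntz_deriv Tm_def)
    then show ?thesis unfolding L2_norm01_def by simp
  qed
  have e2: "L2_norm01 (muntz n (Tm a) lam) = sqrt (nq (Tm a))"
    using L2_muntz(1)[OF re] by (simp add: nq_def)
  have e3: "L2_norm01 (muntz n a lam) = sqrt (nq a)"
    using L2_muntz(1)[OF re] by (simp add: nq_def)
  have "sqrt (nq (Tm a)) \<le> sqrt ((M + sqrt (Sf n))^2 * nq a)" using key by (rule real_sqrt_le_mono)
  also have "\<dots> = (M + sqrt (Sf n)) * sqrt (nq a)" using M0 S0 by (simp add: real_sqrt_mult)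
  finally show ?thesis unfolding e1 e2 e3 M_def Sf_def by simp
qed

end
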